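(* Let $q$ be a prime power and $T\in\mathbb F_q[X,Y,Z]$ a reduced polynomial satisfying Property (e): for all $a,b,c,d\in\mathbb F_q$ with $a\neq c$ there is a unique pair $(y,z)\in\mathbb F_q^2$ with $T(a,y,z)=b$ and $T(c,y,z)=d$. Let $\{1,\beta\}$ be a basis of $\mathbb F_{q^2}$ over $\mathbb F_q$, and for $a,b\in\mathbb F_q$ let $S_{a,b}\in\mathbb F_{q^2}[X]$ be the polynomial of least degree inducing the map $\mathbb F_{q^2}\to\mathbb F_{q^2}$, $y+\beta z\mapsto T(a,y,z)+\beta T(b,y,z)$ ($y,z\in\mathbb F_q$). Then $S_{a,b}$ is a permutation polynomial over $\mathbb F_{q^2}$ whenever $a\neq b$.
   Context: A polynomial is reduced if its degree in each variable is less than $q$. A permutation polynomial over $\mathbb F_{q^2}$ is one inducing a bijection of $\mathbb F_{q^2}$. *)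

theory Defs
  imports "HOL-Computational_Algebra.Computational_Algebra"
begin

text \<open>The ambient finite field 'b plays the role of F_{q^2}; F_q is realised as
  its unique subfield of order q, namely the set of roots of x^q - x.\<close>
definition subfield_q :: "nat \<Rightarrow> ('b::field) set" where
  "subfield_q q = {x. x ^ q = x}"

text \<open>A reduced polynomial in F_q[X,Y,Z] given by its coefficients:
  coefficient of X^i Y^j Z^k is Tc i j k; all coefficients lie in F_q and vanish
  unless i, j, k < q.\<close>
definition reduced_poly3 :: "nat \<Rightarrow> (nat \<Rightarrow> nat \<Rightarrow> nat \<Rightarrow> 'b::field) \<Rightarrow> bool" where
  "reduced_poly3 q Tc \<longleftrightarrow>
     (\<forall>i j k. Tc i j k \<in> subfield_q q) \<and>
     (\<forall>i j k. \<not> (i < q \<and> j < q \<and> k < q) \<longrightarrow> Tc i j k = 0)"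

definition eval3 :: "nat \<Rightarrow> (nat \<Rightarrow> nat \<Rightarrow> nat \<Rightarrow> 'b::field) \<Rightarrow> 'b \<Rightarrow> 'b \<Rightarrow> 'b \<Rightarrow> 'b" where
  "eval3 q Tc x y z = (\<Sum>i<q. \<Sum>j<q. \<Sum>k<q. Tc i j k * x ^ i * y ^ j * z ^ k)"

definition property_e :: "nat \<Rightarrow> (nat \<Rightarrow> nat \<Rightarrow> nat \<Rightarrow> 'b::field) \<Rightarrow> bool" where
  "property_e q Tc \<longleftrightarrow>
     (\<forall>a\<in>subfield_q q. \<forall>b\<in>subfield_q q. \<forall>c\<in>subfield_q q. \<forall>d\<in>subfield_q q. a \<noteq> c \<longrightarrow>
        (\<exists>!p. p \<in> subfield_q q \<times> subfield_q q \<and>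
              eval3 q Tc a (fst p) (snd p) = b \<and> eval3 q Tc c (fst p) (snd p) = d))"

definition is_basis_1_beta :: "nat \<Rightarrow> 'b::field \<Rightarrow> bool" where
  "is_basis_1_beta q \<beta> \<longleftrightarrow>
     (\<forall>w. \<exists>!p. p \<in> subfield_q q \<times> subfield_q q \<and> w = fst p + \<beta> * snd p)"

definition induces_S :: "nat \<Rightarrow> (nat \<Rightarrow> nat \<Rightarrow> nat \<Rightarrow> 'b::field) \<Rightarrow> 'b \<Rightarrow> 'b \<Rightarrow> 'b \<Rightarrow> 'b poly \<Rightarrow> bool" where
  "induces_S q Tc \<beta> a b S \<longleftrightarrow>
     (\<forall>y\<in>subfield_q q. \<forall>z\<in>subfield_q q.
        poly S (y + \<beta> * z) = eval3 q Tc a y z + \<beta> * eval3 q Tc b y z)"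

definition is_S_ab :: "nat \<Rightarrow> (nat \<Rightarrow> nat \<Rightarrow> nat \<Rightarrow> 'b::field) \<Rightarrow> 'b \<Rightarrow> 'b \<Rightarrow> 'b \<Rightarrow> 'b poly \<Rightarrow> bool" where
  "is_S_ab q Tc \<beta> a b S \<longleftrightarrow>
     induces_S q Tc \<beta> a b S \<and> (\<forall>S'. induces_S q Tc \<beta> a b S' \<longrightarrow> degree S \<le> degree S')"

definition permutation_poly :: "'b::field poly \<Rightarrow> bool" where
  "permutation_poly S \<longleftrightarrow> bij (poly S)"

end

theory Submission
  imports Defs
begin

theorem lemma4p6:
  fixes q :: nat and Tc :: "nat \<Rightarrow> nat \<Rightarrow> nat \<Rightarrow> 'b::{field,finite}"
    and \<beta> a b :: 'b and S :: "'b poly"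
  assumes "\<exists>p k. prime p \<and> k > 0 \<and> q = p ^ k"
    and "card (UNIV :: 'b set) = q ^ 2"
    and "reduced_poly3 q Tc"
    and "property_e q Tc"
    and "is_basis_1_beta q \<beta>"
    and "a \<in> subfield_q q" and "b \<in> subfield_q q"
    and "is_S_ab q Tc \<beta> a b S"
    and "a \<noteq> b"
  shows "permutation_poly S"
proof -
  have ind: "induces_S q Tc \<beta> a b S" using assms(8) unfolding is_S_ab_def by blast
  have "w \<in> range (poly S)" for w
  proof -
    obtain p where p: "p \<in> subfield_q q \<times> subfield_q q" "w = fst p + \<beta> * snd p"
      using assms(5) unfolding is_basis_1_beta_def by blast
    then have "fst p \<in> subfield_q q" "snd p \<in> subfield_q q" by auto
    then obtain r where r: "r \<in> subfield_q q \<times> subfield_q q"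
      "eval3 q Tc a (fst r) (snd r) = fst p" "eval3 q Tc b (fst r) (snd r) = snd p"
      using assms(4,6,7,9) unfolding property_e_def by metis
    then have "poly S (fst r + \<beta> * snd r) = w"
      using ind p(2) unfolding induces_S_def by (auto simp: mem_Times_iff)
    then show ?thesis by (metis rangeI)
  qed
  then have "surj (poly S)" by blast
  then show ?thesis unfolding permutation_poly_def
    by (simp add: bij_def finite_UNIV_surj_inj)
qed

end
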